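(* For every $k\in\{0,\dots,K\}$ with $\sigma_k<\lceil qn\rceil$, the function $\Psi_k^{\mathrm{BSAA}}$ is strictly positive on $(0,q)$ and on $(q,1)$, and $\log\Psi_k^{\mathrm{BSAA}}$ is strictly concave on $(0,q)$ and strictly concave on $(q,1)$ (i.e., $\Psi_k^{\mathrm{BSAA}}$ is strictly log-concave when restricted to $[0,q]$ and when restricted to $[q,1]$).
   Context: Fix $c_u,c_o>0$ and $q=c_u/(c_u+c_o)\in(0,1)$. Fix $K\ge1$, $\bm n=(n_1,\dots,n_K)\in\mathbb N^K$, $n=\sum_k n_k$, $\sigma_k=\sum_{\ell=1}^k n_\ell$ ($\sigma_0=0$). $B_{r,m}(p)=\sum_{j=r}^m\binom mj p^j(1-p)^{m-j}$ (with $B_{r,m}\equiv1$ if $r<0$). For $v\in[0,1]$, $\Psi_k^{\mathrm{BSAA}}(v)=\big(1-B_{\lceil qn\rceil-\sigma_k,\,n-\sigma_k}(v)\big)(v-q)+(q-v)^+$, where $y^+=\max\{y,0\}$. *)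

theory Defs
  imports "HOL-Analysis.Analysis"
begin

definition binom_tail :: "int \<Rightarrow> nat \<Rightarrow> real \<Rightarrow> real" where
  "binom_tail r m p =
     (if r < 0 then 1
      else (\<Sum>j\<in>{nat r..m}. real (m choose j) * p ^ j * (1 - p) ^ (m - j)))"

definition sigma :: "(nat \<Rightarrow> nat) \<Rightarrow> nat \<Rightarrow> nat" where
  "sigma ns k = (\<Sum>l\<in>{1..k}. ns l)"

definition Psi_BSAA :: "real \<Rightarrow> (nat \<Rightarrow> nat) \<Rightarrow> nat \<Rightarrow> nat \<Rightarrow> real \<Rightarrow> real" where
  "Psi_BSAA q ns K k v =
     (let n = sigma ns K in
       (1 - binom_tail (\<lceil>q * real n\<rceil> - int (sigma ns k)) (n - sigma ns k) v) * (v - q)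
       + max (q - v) 0)"

definition strictly_concave_on :: "real set \<Rightarrow> (real \<Rightarrow> real) \<Rightarrow> bool" where
  "strictly_concave_on S f \<longleftrightarrow> convex S \<and>
     (\<forall>x\<in>S. \<forall>y\<in>S. x \<noteq> y \<longrightarrow> (\<forall>u::real. 0 < u \<and> u < 1 \<longrightarrow>
        f (u * x + (1 - u) * y) > u * f x + (1 - u) * f y))"

end

theory Submission
  imports Defs
begin

definition TT :: "nat \<Rightarrow> nat \<Rightarrow> real \<Rightarrow> real" where
  "TT m r v = (\<Sum>j\<in>{r..m}. real (m choose j) * v ^ j * (1 - v) ^ (m - j))"

definition fd :: "nat \<Rightarrow> nat \<Rightarrow> real \<Rightarrow> real" where
  "fd m r v = real m * real ((m-1) choose (r-1)) * v^(r-1) * (1-v)^(m-r)"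

lemma binom_aux2: "r \<le> m \<Longrightarrow> (m - r) * (m choose r) = m * ((m - 1) choose r)"
proof (cases m)
  case 0 then show ?thesis by simp
next
  case (Suc k)
  assume "r \<le> m"
  show ?thesis
  proof (cases r)
    case 0 then show ?thesis using Suc by simp
  next
    case (Suc s)
    have "Suc k choose Suc s = (k choose s) + (k choose Suc s)" by simp
    moreover have "Suc s * (Suc k choose Suc s) = Suc k * (k choose s)" by (rule Suc_times_binomial)
    ultimately show ?thesis using \<open>m = Suc k\<close> Suc \<open>r \<le> m\<close>
      by (simp add: algebra_simps diff_mult_distrib)
  qed
qed

lemma derivT_aux:
  "\<forall>r. 1 \<le> r \<longrightarrow> r + d = m \<longrightarrow> (TT m r has_real_derivative fd m r v) (at v)"
proof (induction d)
  case 0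
  show ?case
  proof (intro allI impI)
    fix r assume "1 \<le> r" "r + 0 = m"
    then have "TT m r = (\<lambda>v. v ^ m)" by (auto simp: TT_def fun_eq_iff)
    moreover have "fd m r v = real m * v ^ (m - 1)" using \<open>r + 0 = m\<close> by (simp add: fd_def)
    ultimately show "(TT m r has_real_derivative fd m r v) (at v)"
      by (auto intro!: derivative_eq_intros)
  qed
next
  case (Suc d)
  show ?case
  proof (intro allI impI)
    fix r assume r: "1 \<le> r" "r + Suc d = m"
    have IH: "(TT m (Suc r) has_real_derivative fd m (Suc r) v) (at v)"
      using Suc.IH r by auto
    have eq: "TT m r = (\<lambda>v. real (m choose r) * v ^ r * (1 - v) ^ (m - r) + TT m (Suc r) v)"
      using r by (auto simp: TT_def fun_eq_iff sum.atLeast_Suc_atMost)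
    have d1: "((\<lambda>v. real (m choose r) * v ^ r * (1 - v) ^ (m - r)) has_real_derivative
        real (m choose r) * (real r * v^(r-1) * (1-v)^(m-r)) - real (m choose r) * (v^r * (real (m-r) * (1-v)^(m-r-1)))) (at v)"
      by (auto intro!: derivative_eq_intros simp: algebra_simps)
    have b1: "real r * real (m choose r) = real m * real ((m-1) choose (r-1))"
      using times_binomial_minus1_eq[of r m] r by (metis of_nat_mult less_le_trans zero_less_one)
    have b2: "real (m - r) * real (m choose r) = real m * real ((m-1) choose r)"
      using binom_aux2[of r m] r by (metis le_add1 of_nat_mult)
    have "real (m choose r) * (real r * v^(r-1) * (1-v)^(m-r)) - real (m choose r) * (v^r * (real (m-r) * (1-v)^(m-r-1)))
          + fd m (Suc r) v = fd m r v"
    proof -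
      have "real (m choose r) * (real r * v^(r-1) * (1-v)^(m-r)) = fd m r v"
        unfolding fd_def proof -
        have "real (m choose r) * (real r * v^(r-1) * (1-v)^(m-r)) = (real r * real (m choose r)) * v^(r-1) * (1-v)^(m-r)" by (simp only: ac_simps)
        then show "real (m choose r) * (real r * v^(r-1) * (1-v)^(m-r)) = real m * real ((m-1) choose (r-1)) * v^(r-1) * (1-v)^(m-r)" using b1 by simp
      qed
      moreover have "real (m choose r) * (v^r * (real (m-r) * (1-v)^(m-r-1))) = fd m (Suc r) v"
        unfolding fd_def using b2 by (simp add: algebra_simps)
      ultimately show ?thesis by simp
    qed
    then show "(TT m r has_real_derivative fd m r v) (at v)"
      unfolding eq using DERIV_add[OF d1 IH] by simp
  qed
qed

lemma derivT: "1 \<le> r \<Longrightarrow> r \<le> m \<Longrightarrow> (TT m r has_real_derivative fd m r v) (at v)"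
  using derivT_aux[of "m - r" m v] by auto

lemma strict_concave_lt:
  fixes f f' :: "real \<Rightarrow> real"
  assumes der: "\<And>x. x \<in> {a<..<b} \<Longrightarrow> (f has_real_derivative f' x) (at x)"
    and mono: "\<And>x y. x \<in> {a<..<b} \<Longrightarrow> y \<in> {a<..<b} \<Longrightarrow> x < y \<Longrightarrow> f' y < f' x"
    and xy: "x \<in> {a<..<b}" "y \<in> {a<..<b}" "x < y" and t: "0 < t" "t < 1"
  shows "f ((1 - t) * x + t * y) > (1 - t) * f x + t * f y"
proof -
  define z where "z = (1 - t) * x + t * y"
  have xz: "z > x" using xy t by (simp add: z_def algebra_simps)
  have "y - z = (1 - t) * (y - x)" by (simp add: z_def algebra_simps)
  also have "\<dots> > 0" using xy t by simp
  finally have yz: "z < y" by simp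
  have ivl: "\<And>w. x \<le> w \<Longrightarrow> w \<le> y \<Longrightarrow> w \<in> {a<..<b}" using xy by auto
  have "\<exists>\<xi>. x < \<xi> \<and> \<xi> < z \<and> f z - f x = (z - x) * f' \<xi>"
    using xz yz by (intro MVT2 der ivl) auto
  then obtain \<xi> where \<xi>: "\<xi> > x" "\<xi> < z" "f z - f x = (z - x) * f' \<xi>" by blast
  have "\<exists>\<eta>. z < \<eta> \<and> \<eta> < y \<and> f y - f z = (y - z) * f' \<eta>"
    using xz yz by (intro MVT2 der ivl) auto
  then obtain \<eta> where \<eta>: "\<eta> > z" "\<eta> < y" "f y - f z = (y - z) * f' \<eta>" by blast
  have "f' \<eta> < f' \<xi>" using mono[of \<xi> \<eta>] ivl \<xi> \<eta> xz yz by auto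
  have p: "(y - z) * (z - x) > 0" using xz yz by simp
  have e1: "(f y - f z) * (z - x) = (y - z) * (z - x) * f' \<eta>" by (simp add: \<eta>(3))
  have e2: "(f z - f x) * (y - z) = (y - z) * (z - x) * f' \<xi>" by (simp add: \<xi>(3))
  have "(f y - f z) * (z - x) < (f z - f x) * (y - z)"
    unfolding e1 e2 using mult_strict_left_mono[OF \<open>f' \<eta> < f' \<xi>\<close> p] .
  also have "z - x = t * (y - x)" by (simp add: z_def algebra_simps)
  also have "y - z = (1 - t) * (y - x)" by (simp add: z_def algebra_simps)
  finally have "(f y - f z) * t < (f z - f x) * (1 - t)"
    using xy by simp
  then show ?thesis by (simp add: z_def algebra_simps)
qed

lemma strict_concaveI:
  fixes f f' :: "real \<Rightarrow> real" and a b :: real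
  assumes der: "\<And>x. x \<in> {a<..<b} \<Longrightarrow> (f has_real_derivative f' x) (at x)"
    and mono: "\<And>x y. x \<in> {a<..<b} \<Longrightarrow> y \<in> {a<..<b} \<Longrightarrow> x < y \<Longrightarrow> f' y < f' x"
  shows "strictly_concave_on {a<..<b} f"
  unfolding strictly_concave_on_def
proof (intro conjI ballI impI allI)
  show "convex {a<..<b}" by simp
  fix x y u :: real assume x: "x \<in> {a<..<b}" and y: "y \<in> {a<..<b}" and ne: "x \<noteq> y" and u: "0 < u \<and> u < 1"
  show "u * f x + (1 - u) * f y < f (u * x + (1 - u) * y)"
  proof (cases "x < y")
    case True
    from strict_concave_lt[OF der mono x y True, of "1 - u"] u show ?thesis by simp
  next
    case False
    then have "y < x" using ne by simp
    from strict_concave_lt[OF der mono y x this, of u] u show ?thesis by (simp add: algebra_simps)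
  qed
qed

lemma strict_concave_cong:
  fixes a b :: real
  assumes "\<And>x. x \<in> {a<..<b} \<Longrightarrow> f x = g x" "strictly_concave_on {a<..<b} g"
  shows "strictly_concave_on {a<..<b} f"
proof -
  have H: "u * x + (1 - u) * y \<in> {a<..<b}" if "x \<in> {a<..<b}" "y \<in> {a<..<b}" "0 < u" "u < 1" for x y u :: real
  proof -
    from that have 1: "u * (x - a) + (1 - u) * (y - a) > 0" and 2: "u * (b - x) + (1 - u) * (b - y) > 0"
      by (auto intro!: add_pos_pos)
    from 1 2 show "u * x + (1 - u) * y \<in> {a<..<b}" by (simp add: algebra_simps)
  qed
  show ?thesis using assms H unfolding strictly_concave_on_def by (metis convex_real_interval(8))
qed

definition gg :: "nat \<Rightarrow> nat \<Rightarrow> real \<Rightarrow> real" where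
  "gg m r v = v^(r-1) * (1-v)^(m-r)"
definition RR :: "nat \<Rightarrow> nat \<Rightarrow> real \<Rightarrow> real" where
  "RR m r v = (\<Sum>j\<in>{r..m}. real (m choose j) * v * (v/(1-v))^(j-r))"
definition SS :: "nat \<Rightarrow> nat \<Rightarrow> real \<Rightarrow> real" where
  "SS m r v = (\<Sum>j\<in>{..<r}. real (m choose j) * (1-v) * ((1-v)/v)^(r-1-j))"

lemma TT_eq:
  assumes "1 \<le> r" "r \<le> m" "0 < v" "v < 1"
  shows "TT m r v = gg m r v * RR m r v"
  unfolding TT_def RR_def gg_def sum_distrib_left
proof (rule sum.cong[OF refl])
  fix j assume j: "j \<in> {r..m}"
  have "j = (r-1) + 1 + (j-r)" using j assms by auto
  then have 1: "v ^ j = v^(r-1) * v * v^(j-r)" by (metis power_add power_one_right)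
  have "m-r = (m-j) + (j-r)" using j by auto
  then have 2: "(1-v)^(m-r) = (1-v)^(m-j) * (1-v)^(j-r)" by (metis power_add)
  have "(1-v)^(j-r) > 0" using assms by simp
  then show "real (m choose j) * v ^ j * (1 - v) ^ (m - j) =
     v ^ (r - 1) * (1 - v) ^ (m - r) * (real (m choose j) * v * (v / (1 - v)) ^ (j - r))"
    unfolding 1 2 power_divide using assms by (simp add: field_simps)
qed

lemma U_eq:
  assumes "1 \<le> r" "r \<le> m" "0 < v" "v < 1"
  shows "1 - TT m r v = gg m r v * SS m r v"
proof -
  have "1 = (v + (1 - v))^m" by simp
  also have "\<dots> = (\<Sum>j\<le>m. real (m choose j) * v^j * (1-v)^(m-j))" by (rule binomial_ring)
  also have "{..m} = {..<r} \<union> {r..m}" using assms by auto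
  also have "(\<Sum>j\<in>{..<r} \<union> {r..m}. real (m choose j) * v^j * (1-v)^(m-j)) =
     (\<Sum>j\<in>{..<r}. real (m choose j) * v^j * (1-v)^(m-j)) + TT m r v"
    unfolding TT_def by (rule sum.union_disjoint) auto
  finally have e: "1 - TT m r v = (\<Sum>j\<in>{..<r}. real (m choose j) * v^j * (1-v)^(m-j))" by simp
  show ?thesis unfolding e SS_def gg_def sum_distrib_left
  proof (rule sum.cong[OF refl])
    fix j assume j: "j \<in> {..<r}"
    have "r-1 = j + (r-1-j)" using j by auto
    then have 1: "v ^ (r-1) = v^j * v^(r-1-j)" by (metis power_add)
    have 2: "(1-v)^(m-j) = (1-v)^(m-r) * (1-v) * (1-v)^(r-1-j)" using j assms
    proof -
      have "m - j = (m - r) + 1 + (r - 1 - j)" using j assms by auto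
      then show ?thesis by (metis power_add power_one_right)
    qed
    have "v^(r-1-j) > 0" using assms by simp
    then show "real (m choose j) * v ^ j * (1 - v) ^ (m - j) =
      v ^ (r - 1) * (1 - v) ^ (m - r) * (real (m choose j) * (1 - v) * ((1 - v) / v) ^ (r - 1 - j))"
      unfolding 1 2 power_divide using assms by (simp add: field_simps)
  qed
qed

lemma gg_pos: "0 < v \<Longrightarrow> v < 1 \<Longrightarrow> gg m r v > 0"
  unfolding gg_def by simp

lemma RR_pos: assumes "r \<le> m" "0 < v" "v < 1" shows "RR m r v > 0"
  unfolding RR_def
proof (rule sum_pos2[of _ r])
  show "0 < real (m choose r) * v * (v / (1 - v)) ^ (r - r)" using assms by simp
qed (use assms in auto)

lemma SS_pos: assumes "1 \<le> r" "r \<le> m" "0 < v" "v < 1" shows "SS m r v > 0"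
  unfolding SS_def
proof (rule sum_pos2[of _ "r - 1"])
  show "0 < real (m choose (r-1)) * (1 - v) * ((1 - v) / v) ^ (r - 1 - (r - 1))" using assms by simp
qed (use assms in auto)

lemma RR_mono: assumes "0 < x" "x \<le> y" "y < 1" shows "RR m r x \<le> RR m r y"
  unfolding RR_def
proof (rule sum_mono)
  fix j
  have "x / (1 - x) \<le> y / (1 - y)" using assms by (intro frac_le) auto
  then have "(x / (1 - x))^(j-r) \<le> (y / (1 - y))^(j-r)" using assms by (intro power_mono) auto
  then have "x * (x / (1 - x))^(j-r) \<le> y * (y / (1 - y))^(j-r)" using assms by (intro mult_mono) auto
  then show "real (m choose j) * x * (x / (1 - x)) ^ (j - r) \<le> real (m choose j) * y * (y / (1 - y)) ^ (j - r)"
    by (simp add: mult.assoc mult_left_mono)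
qed

lemma SS_mono: assumes "0 < x" "x \<le> y" "y < 1" shows "SS m r y \<le> SS m r x"
  unfolding SS_def
proof (rule sum_mono)
  fix j
  have "(1 - y) / y \<le> (1 - x) / x" using assms by (intro frac_le) auto
  then have "((1 - y) / y)^(r-1-j) \<le> ((1 - x) / x)^(r-1-j)" using assms by (intro power_mono) auto
  then have "(1 - y) * ((1 - y) / y)^(r-1-j) \<le> (1 - x) * ((1 - x) / x)^(r-1-j)" using assms by (intro mult_mono) auto
  then show "real (m choose j) * (1 - y) * ((1 - y) / y) ^ (r - 1 - j) \<le> real (m choose j) * (1 - x) * ((1 - x) / x) ^ (r - 1 - j)"
    by (simp add: mult.assoc mult_left_mono)
qed

lemma fd_eq: "fd m r v = real m * real ((m-1) choose (r-1)) * gg m r v"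
  unfolding fd_def gg_def by simp

lemma main_part:
  fixes q :: real and rr :: int and m :: nat
  assumes q: "0 < q" "q < 1" and r1: "1 \<le> rr" and rm: "rr \<le> int m"
  defines "P \<equiv> \<lambda>v. (1 - binom_tail rr m v) * (v - q) + max (q - v) 0"
  shows "(\<forall>v\<in>{0<..<q}. P v > 0) \<and> (\<forall>v\<in>{q<..<1}. P v > 0)
       \<and> strictly_concave_on {0<..<q} (\<lambda>v. ln (P v))
       \<and> strictly_concave_on {q<..<1} (\<lambda>v. ln (P v))"
proof -
  define r where "r = nat rr"
  have r: "1 \<le> r" "r \<le> m" using r1 rm by (auto simp: r_def)
  have bt: "binom_tail rr m v = TT m r v" for v
    using r1 by (simp add: binom_tail_def TT_def r_def)
  define c where "c = real m * real ((m-1) choose (r-1))"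
  have c: "c \<ge> 0" by (simp add: c_def)
  have P1: "P v = TT m r v * (q - v)" if "v < q" for v
    using that by (simp add: P_def bt algebra_simps)
  have P2: "P v = (1 - TT m r v) * (v - q)" if "q < v" for v
    using that by (simp add: P_def bt algebra_simps)
  have Tpos: "TT m r v > 0" if "0 < v" "v < 1" for v
    using TT_eq[OF r that] gg_pos[OF that] RR_pos[OF r(2) that] by simp
  have Upos: "1 - TT m r v > 0" if "0 < v" "v < 1" for v
    using U_eq[OF r that] gg_pos[OF that] SS_pos[OF r that] by simp
  have pos1: "\<forall>v\<in>{0<..<q}. P v > 0"
    using P1 Tpos q by auto
  have pos2: "\<forall>v\<in>{q<..<1}. P v > 0"
    using P2 Upos q by auto
  have sc1: "strictly_concave_on {0<..<q} (\<lambda>v. ln (P v))"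
  proof (rule strict_concave_cong)
    show "ln (P v) = ln (TT m r v) + ln (q - v)" if "v \<in> {0<..<q}" for v
    proof -
      have "0 < v" "v < 1" using that q by auto
      then have "TT m r v > 0" by (rule Tpos)
      then show ?thesis using that P1 by (simp add: ln_mult)
    qed
    show "strictly_concave_on {0<..<q} (\<lambda>v. ln (TT m r v) + ln (q - v))"
    proof (rule strict_concaveI)
      fix v :: real assume v: "v \<in> {0<..<q}"
      then have v01: "0 < v" "v < 1" using q by auto
      have d1: "((\<lambda>v. ln (TT m r v)) has_real_derivative 1 / TT m r v * fd m r v) (at v)"
        by (rule DERIV_chain2[OF DERIV_ln_divide derivT[OF r]]) (use Tpos v01 in auto)
      have d2: "((\<lambda>v. ln (q - v)) has_real_derivative 1 / (q - v) * (-1)) (at v)"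
        by (rule DERIV_chain2[OF DERIV_ln_divide]) (use v in \<open>auto intro!: derivative_eq_intros\<close>)
      have e: "1 / TT m r v * fd m r v = c / RR m r v"
        using TT_eq[OF r v01] gg_pos[OF v01, of m r] RR_pos[OF r(2) v01] unfolding fd_eq c_def by simp
      show "((\<lambda>v. ln (TT m r v) + ln (q - v)) has_real_derivative c / RR m r v - 1 / (q - v)) (at v)"
        using DERIV_add[OF d1 d2] e by simp
    next
      fix x y :: real assume x: "x \<in> {0<..<q}" and y: "y \<in> {0<..<q}" and xy: "x < y"
      have x01: "0 < x" "x < 1" and y01: "0 < y" "y < 1" using x y q by auto
      have "c / RR m r y \<le> c / RR m r x"
        using RR_mono[of x y m r] x01 y01 xy RR_pos[OF r(2) x01] c by (intro divide_left_mono) auto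
      moreover have "1 / (q - x) < 1 / (q - y)" using x y xy by (intro divide_strict_left_mono) auto
      ultimately show "c / RR m r y - 1 / (q - y) < c / RR m r x - 1 / (q - x)" by simp
    qed
  qed
  have sc2: "strictly_concave_on {q<..<1} (\<lambda>v. ln (P v))"
  proof (rule strict_concave_cong)
    show "ln (P v) = ln (1 - TT m r v) + ln (v - q)" if "v \<in> {q<..<1}" for v
    proof -
      have "0 < v" "v < 1" using that q by auto
      then have "1 - TT m r v > 0" by (rule Upos)
      then show ?thesis using that P2 by (simp add: ln_mult)
    qed
    show "strictly_concave_on {q<..<1} (\<lambda>v. ln (1 - TT m r v) + ln (v - q))"
    proof (rule strict_concaveI)
      fix v :: real assume v: "v \<in> {q<..<1}"
      then have v01: "0 < v" "v < 1" using q by auto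
      have dT: "((\<lambda>v. 1 - TT m r v) has_real_derivative 0 - fd m r v) (at v)"
        by (intro DERIV_diff DERIV_const derivT[OF r])
      have d1: "((\<lambda>v. ln (1 - TT m r v)) has_real_derivative 1 / (1 - TT m r v) * (0 - fd m r v)) (at v)"
        by (rule DERIV_chain2[OF DERIV_ln_divide dT]) (use Upos v01 in auto)
      have d2: "((\<lambda>v. ln (v - q)) has_real_derivative 1 / (v - q) * 1) (at v)"
        by (rule DERIV_chain2[OF DERIV_ln_divide]) (use v in \<open>auto intro!: derivative_eq_intros\<close>)
      have e: "1 / (1 - TT m r v) * (0 - fd m r v) = - (c / SS m r v)"
        using U_eq[OF r v01] gg_pos[OF v01, of m r] SS_pos[OF r v01] unfolding fd_eq c_def by simp
      show "((\<lambda>v. ln (1 - TT m r v) + ln (v - q)) has_real_derivative - (c / SS m r v) + 1 / (v - q)) (at v)"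
        using DERIV_add[OF d1 d2] e by simp
    next
      fix x y :: real assume x: "x \<in> {q<..<1}" and y: "y \<in> {q<..<1}" and xy: "x < y"
      have x01: "0 < x" "x < 1" and y01: "0 < y" "y < 1" using x y q by auto
      have "c / SS m r x \<le> c / SS m r y"
        using SS_mono[of x y m r] x01 y01 xy SS_pos[OF r y01] c by (intro divide_left_mono) auto
      moreover have "1 / (y - q) < 1 / (x - q)" using x y xy by (intro divide_strict_left_mono) auto
      ultimately show "- (c / SS m r y) + 1 / (y - q) < - (c / SS m r x) + 1 / (x - q)" by simp
    qed
  qed
  show ?thesis using pos1 pos2 sc1 sc2 by blast
qed

theorem lemma3:
  fixes c_u c_o :: real and K :: nat and ns :: "nat \<Rightarrow> nat" and k :: nat
  assumes "c_u > 0" and "c_o > 0"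
    and "K \<ge> 1"
    and "\<forall>l\<in>{1..K}. ns l \<ge> 1"
    and "k \<le> K"
    and "int (sigma ns k) < \<lceil>(c_u / (c_u + c_o)) * real (sigma ns K)\<rceil>"
  shows "(\<forall>v\<in>{0<..<c_u / (c_u + c_o)}. Psi_BSAA (c_u / (c_u + c_o)) ns K k v > 0)
       \<and> (\<forall>v\<in>{c_u / (c_u + c_o)<..<1}. Psi_BSAA (c_u / (c_u + c_o)) ns K k v > 0)
       \<and> strictly_concave_on {0<..<c_u / (c_u + c_o)}
            (\<lambda>v. ln (Psi_BSAA (c_u / (c_u + c_o)) ns K k v))
       \<and> strictly_concave_on {c_u / (c_u + c_o)<..<1}
            (\<lambda>v. ln (Psi_BSAA (c_u / (c_u + c_o)) ns K k v))"
proof -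
  define q where "q = c_u / (c_u + c_o)"
  define n where "n = sigma ns K"
  define s where "s = sigma ns k"
  have q: "0 < q" "q < 1" using assms(1,2) by (auto simp: q_def)
  have "q * real n \<le> real n" using q by (intro mult_left_le_one_le) auto
  then have cn: "\<lceil>q * real n\<rceil> \<le> int n" by (simp add: ceiling_le_iff)
  have hs: "int s < \<lceil>q * real n\<rceil>" using assms(6) by (simp add: q_def n_def s_def)
  have sn: "s \<le> n" using hs cn by linarith
  have "\<lceil>q * real n\<rceil> - int s \<le> int (n - s)" using cn sn by simp
  then have M: "(\<forall>v\<in>{0<..<q}. (\<lambda>v. (1 - binom_tail (\<lceil>q * real n\<rceil> - int s) (n - s) v) * (v - q) + max (q - v) 0) v > 0)
       \<and> (\<forall>v\<in>{q<..<1}. (\<lambda>v. (1 - binom_tail (\<lceil>q * real n\<rceil> - int s) (n - s) v) * (v - q) + max (q - v) 0) v > 0)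
       \<and> strictly_concave_on {0<..<q} (\<lambda>v. ln ((\<lambda>v. (1 - binom_tail (\<lceil>q * real n\<rceil> - int s) (n - s) v) * (v - q) + max (q - v) 0) v))
       \<and> strictly_concave_on {q<..<1} (\<lambda>v. ln ((\<lambda>v. (1 - binom_tail (\<lceil>q * real n\<rceil> - int s) (n - s) v) * (v - q) + max (q - v) 0) v))"
    using hs by (intro main_part q) auto
  have eq: "Psi_BSAA q ns K k = (\<lambda>v. (1 - binom_tail (\<lceil>q * real n\<rceil> - int s) (n - s) v) * (v - q) + max (q - v) 0)"
    by (simp add: Psi_BSAA_def n_def s_def fun_eq_iff Let_def)
  show ?thesis using M unfolding q_def[symmetric] eq by simp
qed

end
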